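(* Let $\Lambda_0$ be the even shift over $\{0,1\}$ (the subshift with forbidden words $1\,0^{2n+1}\,1$, $n\in\mathbb Z_{\ge0}$) and $\Lambda_1$ the odd shift over $\{0,1\}$ (forbidden words $1\,0^{2n}\,1$, $n\in\mathbb Z_{\ge0}$). Then the one-sided subshifts $(X_{\Lambda_0},\sigma_{\Lambda_0})$ and $(X_{\Lambda_1},\sigma_{\Lambda_1})$ are continuously orbit equivalent.
   Context: Both are normal subshifts. Subshifts over finite alphabet $\Sigma$: $B_l(\Lambda)$, $B_*(\Lambda)$ admissible words; $X_\Lambda=\{(x_n)_{n\in\mathbb N}:(x_n)_{n\in\mathbb Z}\in\Lambda\}$ with shift $\sigma_\Lambda$. $\Gamma_l^-(\mu)=\{\nu\in B_l(\Lambda):\nu\mu\in B_*(\Lambda)\}$, $\Gamma_*^+(\mu)=\{\nu:\mu\nu\in B_*(\Lambda)\}$; $\mu$ is $l$-synchronizing if $\Gamma_l^-(\mu)=\Gamma_l^-(\mu\omega)$ for all $\omega\in\Gamma_*^+(\mu)$, $S_l(\Lambda)$ the set of these; $\mu\sim_l\nu$ iff $\Gamma_l^-(\mu)=\Gamma_l^-(\nu)$. The minimal presentation $\mathfrak L=\mathfrak L_\Lambda^{\min}$ of a normal $\Lambda$ has vertex sets $V_0$ a singleton and $V_l=S_l(\Lambda)/\!\sim_l$, one edge labeled $\alpha$ from $[\alpha\nu]_l$ to $[\nu]_{l+1}$ for each $\nu\in S_{l+1}(\Lambda)$, $\alpha\nu\in B_*(\Lambda)$, and maps $\iota([\nu]_{l+1})=[\nu]_l$.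 Let $\Omega_{\mathfrak L}=\{(u^l)_{l\ge0}\in\prod_lV_l:\iota(u^{l+1})=u^l\}$; $E_{\mathfrak L}$ the set of $(u,\alpha,w)\in\Omega_{\mathfrak L}\times\Sigma\times\Omega_{\mathfrak L}$ such that for each $l$ there is an edge from $u^l$ to $w^{l+1}$ labeled $\alpha$; $X_{\mathfrak L}=\{(\alpha_i,u_i)_{i\in\mathbb N}:\exists u_0,\ (u_{i-1},\alpha_i,u_i)\in E_{\mathfrak L}\ \forall i\ge1\}$ with product topology, shift $\sigma_{\mathfrak L}$ and factor map $\pi_{\mathfrak L}((\alpha_i,u_i)_i)=(\alpha_i)_i$. For normal $\Lambda_0,\Lambda_1$ with $\mathfrak L_i=\mathfrak L_{\Lambda_i}^{\min}$, $X_{\Lambda_0}$ and $X_{\Lambda_1}$ are continuously orbit equivalent if there exist homeomorphisms $h_{\mathfrak L}:X_{\mathfrak L_0}\to X_{\mathfrak L_1}$, $h_\Lambda:X_{\Lambda_0}\to X_{\Lambda_1}$ and continuous $k_i,l_i:X_{\mathfrak L_i}\to\mathbb Z_{\ge0}$ with $\pi_{\mathfrak L_1}\circ h_{\mathfrak L}=h_\Lambda\circ\pi_{\mathfrak L_0}$, $\sigma_{\mathfrak L_1}^{k_0(x)}(h_{\mathfrak L}(\sigma_{\mathfrak L_0}(x)))=\sigma_{\mathfrak L_1}^{l_0(x)}(h_{\mathfrak L}(x))$ and $\sigma_{\mathfrak L_0}^{k_1(y)}(h_{\mathfrak L}^{-1}(\sigma_{\mathfrak L_1}(y)))=\sigma_{\mathfrak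 L_0}^{l_1(y)}(h_{\mathfrak L}^{-1}(y))$ for all $x\in X_{\mathfrak L_0}$, $y\in X_{\mathfrak L_1}$. *)

theory Defs
  imports "HOL-Analysis.Analysis"
begin

definition occurs :: "'a list \<Rightarrow> (int \<Rightarrow> 'a) \<Rightarrow> bool" where
  "occurs w x \<longleftrightarrow> (\<exists>k::int. \<forall>i<length w. x (k + int i) = w ! i)"

definition Bstar :: "(int \<Rightarrow> 'a) set \<Rightarrow> 'a list set" where
  "Bstar \<Lambda> = {w. \<exists>x\<in>\<Lambda>. occurs w x}"

definition Bl :: "(int \<Rightarrow> 'a) set \<Rightarrow> nat \<Rightarrow> 'a list set" where
  "Bl \<Lambda> l = {w \<in> Bstar \<Lambda>. length w = l}"

definition XLam :: "(int \<Rightarrow> 'a) set \<Rightarrow> (nat \<Rightarrow> 'a) set" where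
  "XLam \<Lambda> = {(\<lambda>n. x (int n)) | x. x \<in> \<Lambda>}"

definition Gminus :: "(int \<Rightarrow> 'a) set \<Rightarrow> nat \<Rightarrow> 'a list \<Rightarrow> 'a list set" where
  "Gminus \<Lambda> l \<mu> = {\<nu> \<in> Bl \<Lambda> l. \<nu> @ \<mu> \<in> Bstar \<Lambda>}"

definition Gplus :: "(int \<Rightarrow> 'a) set \<Rightarrow> 'a list \<Rightarrow> 'a list set" where
  "Gplus \<Lambda> \<mu> = {\<nu>. \<mu> @ \<nu> \<in> Bstar \<Lambda>}"

definition Ssync :: "(int \<Rightarrow> 'a) set \<Rightarrow> nat \<Rightarrow> 'a list set" where
  "Ssync \<Lambda> l = {\<mu> \<in> Bstar \<Lambda>. \<forall>\<omega>\<in>Gplus \<Lambda> \<mu>. Gminus \<Lambda> l \<mu> = Gminus \<Lambda> l (\<mu> @ \<omega>)}"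

definition cls :: "(int \<Rightarrow> 'a) set \<Rightarrow> nat \<Rightarrow> 'a list \<Rightarrow> 'a list set" where
  "cls \<Lambda> l \<mu> = {\<nu> \<in> Ssync \<Lambda> l. Gminus \<Lambda> l \<nu> = Gminus \<Lambda> l \<mu>}"

text \<open>vertex set V_l = S_l(Lambda)/~_l  (for l = 0 this is the singleton {B_*(Lambda)})\<close>
definition Vset :: "(int \<Rightarrow> 'a) set \<Rightarrow> nat \<Rightarrow> 'a list set set" where
  "Vset \<Lambda> l = {cls \<Lambda> l \<mu> | \<mu>. \<mu> \<in> Ssync \<Lambda> l}"

definition iota_rel :: "(int \<Rightarrow> 'a) set \<Rightarrow> nat \<Rightarrow> 'a list set \<Rightarrow> 'a list set \<Rightarrow> bool" where
  "iota_rel \<Lambda> l U W \<longleftrightarrow> (\<exists>\<nu>\<in>Ssync \<Lambda> (Suc l). U = cls \<Lambda> (Suc l) \<nu> \<and> W = cls \<Lambda> l \<nu>)"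

definition edge :: "(int \<Rightarrow> 'a) set \<Rightarrow> nat \<Rightarrow> 'a list set \<Rightarrow> 'a \<Rightarrow> 'a list set \<Rightarrow> bool" where
  "edge \<Lambda> l U \<alpha> W \<longleftrightarrow>
     (\<exists>\<nu>\<in>Ssync \<Lambda> (Suc l). \<alpha> # \<nu> \<in> Bstar \<Lambda> \<and> U = cls \<Lambda> l (\<alpha> # \<nu>) \<and> W = cls \<Lambda> (Suc l) \<nu>)"

definition OmegaL :: "(int \<Rightarrow> 'a) set \<Rightarrow> (nat \<Rightarrow> 'a list set) set" where
  "OmegaL \<Lambda> = {u. (\<forall>l. u l \<in> Vset \<Lambda> l) \<and> (\<forall>l. iota_rel \<Lambda> l (u (Suc l)) (u l))}"

definition EL :: "(int \<Rightarrow> 'a) set \<Rightarrow> ((nat \<Rightarrow> 'a list set) \<times> 'a \<times> (nat \<Rightarrow> 'a list set)) set" where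
  "EL \<Lambda> = {(u, \<alpha>, w). u \<in> OmegaL \<Lambda> \<and> w \<in> OmegaL \<Lambda> \<and> (\<forall>l. edge \<Lambda> l (u l) \<alpha> (w (Suc l)))}"

text \<open>X_L; the sequence (alpha_i,u_i)_{i>=1} is stored as x with x n = (alpha_{n+1}, u_{n+1})\<close>
definition XL :: "(int \<Rightarrow> 'a) set \<Rightarrow> (nat \<Rightarrow> 'a \<times> (nat \<Rightarrow> 'a list set)) set" where
  "XL \<Lambda> = {x. \<exists>u0. (u0, fst (x 0), snd (x 0)) \<in> EL \<Lambda> \<and>
                 (\<forall>n. (snd (x n), fst (x (Suc n)), snd (x (Suc n))) \<in> EL \<Lambda>)}"

definition topXL :: "(int \<Rightarrow> 'a) set \<Rightarrow> (nat \<Rightarrow> 'a \<times> (nat \<Rightarrow> 'a list set)) topology" where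
  "topXL \<Lambda> = subtopology
     (product_topology (\<lambda>_. prod_topology (discrete_topology UNIV)
         (product_topology (\<lambda>_. discrete_topology UNIV) UNIV)) UNIV) (XL \<Lambda>)"

definition topXLam :: "(int \<Rightarrow> 'a) set \<Rightarrow> (nat \<Rightarrow> 'a) topology" where
  "topXLam \<Lambda> = subtopology (product_topology (\<lambda>_. discrete_topology UNIV) UNIV) (XLam \<Lambda>)"

definition shiftn :: "nat \<Rightarrow> (nat \<Rightarrow> 'b) \<Rightarrow> (nat \<Rightarrow> 'b)" where
  "shiftn k x = (\<lambda>n. x (n + k))"

definition piL :: "(nat \<Rightarrow> 'a \<times> 'c) \<Rightarrow> (nat \<Rightarrow> 'a)" where
  "piL x = (\<lambda>n. fst (x n))"

definition coe :: "(int \<Rightarrow> 'a) set \<Rightarrow> (int \<Rightarrow> 'b) set \<Rightarrow> bool" where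
  "coe \<Lambda>0 \<Lambda>1 \<longleftrightarrow>
    (\<exists>hL hLinv hLam k0 l0 k1 l1.
       homeomorphic_maps (topXL \<Lambda>0) (topXL \<Lambda>1) hL hLinv \<and>
       homeomorphic_map (topXLam \<Lambda>0) (topXLam \<Lambda>1) hLam \<and>
       continuous_map (topXL \<Lambda>0) (discrete_topology (UNIV::nat set)) k0 \<and>
       continuous_map (topXL \<Lambda>0) (discrete_topology (UNIV::nat set)) l0 \<and>
       continuous_map (topXL \<Lambda>1) (discrete_topology (UNIV::nat set)) k1 \<and>
       continuous_map (topXL \<Lambda>1) (discrete_topology (UNIV::nat set)) l1 \<and>
       (\<forall>x\<in>XL \<Lambda>0. piL (hL x) = hLam (piL x)) \<and>
       (\<forall>x\<in>XL \<Lambda>0. shiftn (k0 x) (hL (shiftn 1 x)) = shiftn (l0 x) (hL x)) \<and>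
       (\<forall>y\<in>XL \<Lambda>1. shiftn (k1 y) (hLinv (shiftn 1 y)) = shiftn (l1 y) (hLinv y)))"

section \<open>Even and odd shifts over {0,1} (0 = False, 1 = True)\<close>

definition even_shift :: "(int \<Rightarrow> bool) set" where
  "even_shift = {x. \<forall>n::nat. \<not> occurs (True # replicate (2*n+1) False @ [True]) x}"

definition odd_shift :: "(int \<Rightarrow> bool) set" where
  "odd_shift = {x. \<forall>n::nat. \<not> occurs (True # replicate (2*n) False @ [True]) x}"

end

theory Submission
  imports Defs
begin


definition pat :: "nat \<Rightarrow> bool list" where
  "pat m = True # replicate m False @ [True]"

lemma length_pat[simp]: "length (pat m) = m + 2"
  by (simp add: pat_def)

lemma pat_nth: "t < m + 2 \<Longrightarrow> pat m ! t = (t = 0 \<or> t = m + 1)"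
  unfolding pat_def
  by (cases t) (auto simp: nth_append)

lemma occurs_pat: "occurs (pat m) x \<longleftrightarrow>
   (\<exists>k. x k \<and> x (k + int m + 1) \<and> (\<forall>j. 0 < j \<longrightarrow> j \<le> m \<longrightarrow> \<not> x (k + int j)))"
proof
  assume "occurs (pat m) x"
  then obtain k where k: "\<forall>i<m+2. x (k + int i) = pat m ! i" unfolding occurs_def by auto
  have "x k" using k[rule_format, of 0] by (simp add: pat_nth)
  moreover have "x (k + int m + 1)" using k[rule_format, of "m+1"] by (simp add: pat_nth algebra_simps)
  moreover have "\<forall>j. 0 < j \<longrightarrow> j \<le> m \<longrightarrow> \<not> x (k + int j)"
    using k by (auto simp: pat_nth)
  ultimately show "\<exists>k. x k \<and> x (k + int m + 1) \<and> (\<forall>j. 0 < j \<longrightarrow> j \<le> m \<longrightarrow> \<not> x (k + int j))" by blast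
next
  assume "\<exists>k. x k \<and> x (k + int m + 1) \<and> (\<forall>j. 0 < j \<longrightarrow> j \<le> m \<longrightarrow> \<not> x (k + int j))"
  then obtain k where a: "x k" "x (k + int m + 1)" "\<forall>j. 0 < j \<longrightarrow> j \<le> m \<longrightarrow> \<not> x (k + int j)" by blast
  have "\<forall>i<length (pat m). x (k + int i) = pat m ! i"
  proof (intro allI impI)
    fix i assume "i < length (pat m)"
    then have i: "i < m + 2" by simp
    show "x (k + int i) = pat m ! i"
    proof (cases "i = 0")
      case True then show ?thesis using a by (simp add: pat_nth)
    next
      case False
      show ?thesis
      proof (cases "i = m + 1")
        case True then show ?thesis using a i by (simp add: pat_nth algebra_simps)
      next
        case False2: False
        then show ?thesis using a(3)[rule_format, of i] i False by (simp add: pat_nth)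
      qed
    qed
  qed
  then show "occurs (pat m) x" unfolding occurs_def by blast
qed

definition Lq :: "bool \<Rightarrow> (int \<Rightarrow> bool) set" where
  "Lq q = {x. \<forall>m. odd m = q \<longrightarrow> \<not> occurs (pat m) x}"

lemma even_Lq: "even_shift = Lq True"
proof -
  have "(\<forall>n. \<not> occurs (pat (2*n+1)) x) \<longleftrightarrow> (\<forall>m. odd m = True \<longrightarrow> \<not> occurs (pat m) x)" for x
  proof
    assume a: "\<forall>n. \<not> occurs (pat (2*n+1)) x"
    show "\<forall>m. odd m = True \<longrightarrow> \<not> occurs (pat m) x"
    proof (intro allI impI)
      fix m :: nat assume "odd m = True"
      then have "m = 2 * (m div 2) + 1" by simp
      then show "\<not> occurs (pat m) x" using a by metis
    qed
  qed auto
  then show ?thesis unfolding even_shift_def Lq_def pat_def by auto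
qed

lemma odd_Lq: "odd_shift = Lq False"
proof -
  have "(\<forall>n. \<not> occurs (pat (2*n)) x) \<longleftrightarrow> (\<forall>m. odd m = False \<longrightarrow> \<not> occurs (pat m) x)" for x
  proof
    assume a: "\<forall>n. \<not> occurs (pat (2*n)) x"
    show "\<forall>m. odd m = False \<longrightarrow> \<not> occurs (pat m) x"
    proof (intro allI impI)
      fix m :: nat assume "odd m = False"
      then have "m = 2 * (m div 2)" by simp
      then show "\<not> occurs (pat m) x" using a by metis
    qed
  qed auto
  then show ?thesis unfolding odd_shift_def Lq_def pat_def by auto
qed

definition okw :: "bool \<Rightarrow> bool list \<Rightarrow> bool" where
  "okw q w \<longleftrightarrow> (\<forall>i m. i + m + 1 < length w \<longrightarrow> w!i \<longrightarrow> w!(i+m+1) \<longrightarrow>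
      (\<forall>j. i < j \<longrightarrow> j \<le> i + m \<longrightarrow> \<not> w!j) \<longrightarrow> odd m \<noteq> q)"

definition oks :: "bool \<Rightarrow> (nat \<Rightarrow> bool) \<Rightarrow> bool" where
  "oks q a \<longleftrightarrow> (\<forall>i m. a i \<longrightarrow> a (i+m+1) \<longrightarrow>
      (\<forall>j. i < j \<longrightarrow> j \<le> i + m \<longrightarrow> \<not> a j) \<longrightarrow> odd m \<noteq> q)"

lemma Bstar_Lq: "Bstar (Lq q) = {w. okw q w}"
proof (intro set_eqI iffI)
  fix w assume "w \<in> Bstar (Lq q)"
  then obtain x k where x: "x \<in> Lq q" and k: "\<forall>i<length w. x (k + int i) = w ! i"
    unfolding Bstar_def occurs_def by blast
  show "w \<in> {w. okw q w}" unfolding okw_def mem_Collect_eq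
  proof (intro allI impI notI)
    fix i m assume h: "i + m + 1 < length w" "w!i" "w!(i+m+1)"
      "\<forall>j. i < j \<longrightarrow> j \<le> i + m \<longrightarrow> \<not> w!j" and h5: "odd m = q"
    have "occurs (pat m) x" unfolding occurs_pat
    proof (intro exI conjI allI impI)
      show "x (k + int i)" using k h by auto
      have "x (k + int (i+m+1))" using k[rule_format, of "i+m+1"] h by simp
      then show "x (k + int i + int m + 1)" by (simp add: algebra_simps)
      fix j assume "0 < j" "j \<le> m"
      then show "\<not> x (k + int i + int j)" using k[rule_format, of "i+j"] h by (simp add: add.assoc)
    qed
    then show False using x h5 unfolding Lq_def by blast
  qed
next
  fix w assume "w \<in> {w. okw q w}"
  then have ok: "okw q w" by simp
  define x where "x = (\<lambda>n::int. if 0 \<le> n \<and> n < int (length w) then w ! nat n else False)"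
  have "x \<in> Lq q" unfolding Lq_def mem_Collect_eq
  proof (intro allI impI notI)
    fix m assume "odd m = q" and "occurs (pat m) x"
    then obtain k where a: "x k" "x (k + int m + 1)" "\<forall>j. 0 < j \<longrightarrow> j \<le> m \<longrightarrow> \<not> x (k + int j)"
      unfolding occurs_pat by blast
    have k0: "0 \<le> k" using a(1) unfolding x_def by (auto split: if_splits)
    have km: "k + int m + 1 < int (length w)" using a(2) unfolding x_def by (auto split: if_splits)
    define i where "i = nat k"
    have "odd m \<noteq> q"
    proof (rule ok[unfolded okw_def, rule_format, of i m])
      show "i + m + 1 < length w" using km k0 i_def by linarith
      show "w ! i" using a(1) k0 unfolding x_def i_def by (auto split: if_splits)
      show "w ! (i+m+1)" using a(2) k0 km unfolding x_def i_def
        by (auto split: if_splits simp: nat_add_distrib)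
      fix j
      assume ij: "i < j" "j \<le> i + m"
      have e: "k + int (j - i) = int j" using ij k0 unfolding i_def by simp
      have "\<not> x (k + int (j - i))" using a(3)[rule_format, of "j - i"] ij by simp
      then show "\<not> w ! j" using e km ij k0 unfolding x_def i_def
        by (auto split: if_splits)
    qed
    then show False using \<open>odd m = q\<close> by simp
  qed
  moreover have "occurs w x" unfolding occurs_def x_def by (intro exI[of _ 0]) auto
  ultimately show "w \<in> Bstar (Lq q)" unfolding Bstar_def by blast
qed

lemma XLam_Lq: "XLam (Lq q) = {a. oks q a}"
proof (intro set_eqI iffI)
  fix a assume "a \<in> XLam (Lq q)"
  then obtain x where x: "x \<in> Lq q" and a: "a = (\<lambda>n. x (int n))" unfolding XLam_def by blast
  show "a \<in> {a. oks q a}" unfolding oks_def mem_Collect_eq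
  proof (intro allI impI notI)
    fix i m assume h: "a i" "a (i+m+1)" "\<forall>j. i < j \<longrightarrow> j \<le> i + m \<longrightarrow> \<not> a j" "odd m = q"
    have "occurs (pat m) x" unfolding occurs_pat
    proof (intro exI conjI allI impI)
      show "x (int i)" using a h by auto
      have "x (int (i+m+1))" using a h by simp
      then show "x (int i + int m + 1)" by (simp add: algebra_simps)
      fix j assume "0 < j" "j \<le> m"
      then show "\<not> x (int i + int j)" using a h(3)[rule_format, of "i+j"] by simp
    qed
    then show False using x h(4) unfolding Lq_def by blast
  qed
next
  fix a assume "a \<in> {a. oks q a}"
  then have ok: "oks q a" by simp
  define x where "x = (\<lambda>n::int. if 0 \<le> n then a (nat n) else False)"
  have "x \<in> Lq q" unfolding Lq_def mem_Collect_eq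
  proof (intro allI impI notI)
    fix m assume "odd m = q" and "occurs (pat m) x"
    then obtain k where c: "x k" "x (k + int m + 1)" "\<forall>j. 0 < j \<longrightarrow> j \<le> m \<longrightarrow> \<not> x (k + int j)"
      unfolding occurs_pat by blast
    have k0: "0 \<le> k" using c(1) unfolding x_def by (auto split: if_splits)
    define i where "i = nat k"
    have "odd m \<noteq> q"
    proof (rule ok[unfolded oks_def, rule_format, of i m])
      show "a i" using c(1) k0 unfolding x_def i_def by auto
      show "a (i+m+1)" using c(2) k0 unfolding x_def i_def
        by (auto split: if_splits simp: nat_add_distrib)
      fix j assume "i < j" "j \<le> i + m"
      then show "\<not> a j" using c(3)[rule_format, of "j - i"] k0 unfolding x_def i_def
        by (auto split: if_splits)
    qed
    then show False using \<open>odd m = q\<close> by simp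
  qed
  moreover have "a = (\<lambda>n. x (int n))" unfolding x_def by auto
  ultimately show "a \<in> XLam (Lq q)" unfolding XLam_def by blast
qed




fun lz :: "bool list \<Rightarrow> nat" where
  "lz [] = 0"
| "lz (a # w) = (if a then 0 else Suc (lz w))"

definition has1 :: "bool list \<Rightarrow> bool" where "has1 w \<longleftrightarrow> True \<in> set w"

definition tz :: "bool list \<Rightarrow> nat" where "tz w = lz (rev w)"

lemma has1_simps[simp]: "\<not> has1 []" "has1 (a # w) \<longleftrightarrow> a \<or> has1 w"
  "has1 (xs @ ys) \<longleftrightarrow> has1 xs \<or> has1 ys" "has1 (rev w) = has1 w"
  "has1 (replicate n False) = False"
  by (auto simp: has1_def)

lemma has1_nth: "has1 w \<longleftrightarrow> (\<exists>i<length w. w ! i)"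
  unfolding has1_def by (metis in_set_conv_nth)

lemma lz_le: "lz w \<le> length w"
  by (induction w) auto

lemma lz_less: "has1 w \<Longrightarrow> lz w < length w"
  by (induction w) auto

lemma lz_nth: "has1 w \<Longrightarrow> w ! lz w"
  by (induction w) auto

lemma lz_before: "j < lz w \<Longrightarrow> j < length w \<and> \<not> w ! j"
proof (induction w arbitrary: j)
  case Nil then show ?case by simp
next
  case (Cons a w)
  then show ?case by (cases j) (auto split: if_splits)
qed

lemma lz_nohas: "\<not> has1 w \<Longrightarrow> lz w = length w"
  by (induction w) auto

lemma lz_unique: "k < length w \<Longrightarrow> w ! k \<Longrightarrow> (\<forall>j<k. \<not> w ! j) \<Longrightarrow> lz w = k"
proof (induction w arbitrary: k)
  case Nil then show ?case by simp
next
  case (Cons a w)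
  show ?case
  proof (cases k)
    case 0 then show ?thesis using Cons by simp
  next
    case (Suc k')
    have "\<not> a" using Cons.prems(3) Suc by auto
    moreover have "\<forall>j<k'. \<not> w ! j"
    proof (intro allI impI)
      fix j assume "j < k'"
      then show "\<not> w ! j" using Cons.prems(3)[rule_format, of "Suc j"] Suc by simp
    qed
    then have "lz w = k'" using Cons.IH[of k'] Cons.prems Suc by auto
    ultimately show ?thesis using Suc by simp
  qed
qed

lemma lz_append: "lz (xs @ ys) = (if has1 xs then lz xs else length xs + lz ys)"
  by (induction xs) auto

lemma lz_rep: "lz (replicate n False @ [True]) = n"
  by (induction n) auto

lemma tz_less: "has1 w \<Longrightarrow> tz w < length w"
  unfolding tz_def using lz_less[of "rev w"] by simp

lemma tz_nth: "has1 w \<Longrightarrow> w ! (length w - Suc (tz w))"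
  unfolding tz_def using lz_nth[of "rev w"] lz_less[of "rev w"] by (simp add: rev_nth)

lemma tz_after: "has1 w \<Longrightarrow> length w - Suc (tz w) < j \<Longrightarrow> j < length w \<Longrightarrow> \<not> w ! j"
proof -
  assume h: "has1 w" "length w - Suc (tz w) < j" "j < length w"
  have "length w - Suc j < lz (rev w)" using h tz_less[OF h(1)] unfolding tz_def by linarith
  then have "\<not> rev w ! (length w - Suc j)" using lz_before by blast
  then show ?thesis using h by (simp add: rev_nth Suc_diff_Suc)
qed

lemma tz_unique: "k < length w \<Longrightarrow> w ! k \<Longrightarrow> (\<forall>j. k < j \<longrightarrow> j < length w \<longrightarrow> \<not> w ! j)
   \<Longrightarrow> tz w = length w - Suc k"
  unfolding tz_def
proof (rule lz_unique)
  assume h: "k < length w" "w ! k" "\<forall>j. k < j \<longrightarrow> j < length w \<longrightarrow> \<not> w ! j"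
  show "length w - Suc k < length (rev w)" using h by simp
  show "rev w ! (length w - Suc k)" using h by (simp add: rev_nth Suc_diff_Suc)
  show "\<forall>j<length w - Suc k. \<not> rev w ! j"
  proof (intro allI impI)
    fix j assume "j < length w - Suc k"
    then show "\<not> rev w ! j" using h(3)[rule_format, of "length w - Suc j"] by (simp add: rev_nth)
  qed
qed

lemma F1: "okw q (v @ u) \<longleftrightarrow> okw q v \<and> okw q u \<and> (has1 v \<and> has1 u \<longrightarrow> odd (tz v + lz u) \<noteq> q)"
proof
  assume ok: "okw q (v @ u)"
  have "okw q v" unfolding okw_def
  proof (intro allI impI notI)
    fix i m assume h: "i + m + 1 < length v" "v ! i" "v ! (i + m + 1)"
      "\<forall>j. i < j \<longrightarrow> j \<le> i + m \<longrightarrow> \<not> v ! j" "odd m = q"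
    have "odd m \<noteq> q"
    proof (rule ok[unfolded okw_def, rule_format, of i m])
      show "i + m + 1 < length (v @ u)" using h by simp
      show "(v @ u) ! i" using h by (simp add: nth_append)
      show "(v @ u) ! (i + m + 1)" using h by (simp add: nth_append)
      fix j assume "i < j" "j \<le> i + m"
      then show "\<not> (v @ u) ! j" using h(1) h(4)[rule_format, of j] by (simp add: nth_append)
    qed
    then show False using h by simp
  qed
  moreover have "okw q u" unfolding okw_def
  proof (intro allI impI notI)
    fix i m assume h: "i + m + 1 < length u" "u ! i" "u ! (i + m + 1)"
      "\<forall>j. i < j \<longrightarrow> j \<le> i + m \<longrightarrow> \<not> u ! j" "odd m = q"
    have "odd m \<noteq> q"
    proof (rule ok[unfolded okw_def, rule_format, of "length v + i" m])
      show "length v + i + m + 1 < length (v @ u)" using h by simp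
      show "(v @ u) ! (length v + i)" using h by (simp add: nth_append)
      show "(v @ u) ! (length v + i + m + 1)" using h by (simp add: nth_append add.assoc)
      fix j assume "length v + i < j" "j \<le> length v + i + m"
      then show "\<not> (v @ u) ! j" using h(4)[rule_format, of "j - length v"] by (simp add: nth_append)
    qed
    then show False using h by simp
  qed
  moreover have "has1 v \<and> has1 u \<longrightarrow> odd (tz v + lz u) \<noteq> q"
  proof
    assume hh: "has1 v \<and> has1 u"
    define i where "i = length v - Suc (tz v)"
    have tl: "tz v < length v" using hh tz_less by blast
    have ll: "lz u < length u" using hh lz_less by blast
    show "odd (tz v + lz u) \<noteq> q"
    proof (rule ok[unfolded okw_def, rule_format, of i "tz v + lz u"])
      show "i + (tz v + lz u) + 1 < length (v @ u)" using tl ll i_def by simp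
      have "i < length v" using tl i_def by simp
      then show "(v @ u) ! i" using tz_nth[of v] hh i_def by (simp add: nth_append)
      have eq: "i + (tz v + lz u) + 1 = length v + lz u" using tl i_def by simp
      show "(v @ u) ! (i + (tz v + lz u) + 1)" unfolding eq nth_append_length_plus
        using lz_nth[of u] hh by simp
      fix j assume j: "i < j" "j \<le> i + (tz v + lz u)"
      show "\<not> (v @ u) ! j"
      proof (cases "j < length v")
        case True then show ?thesis using tz_after[of v j] hh j i_def by (simp add: nth_append)
      next
        case False
        then have "j - length v < lz u" using j tl i_def by simp
        then show ?thesis using lz_before[of "j - length v" u] False by (simp add: nth_append)
      qed
    qed
  qed
  ultimately show "okw q v \<and> okw q u \<and> (has1 v \<and> has1 u \<longrightarrow> odd (tz v + lz u) \<noteq> q)" by blast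
next
  assume H: "okw q v \<and> okw q u \<and> (has1 v \<and> has1 u \<longrightarrow> odd (tz v + lz u) \<noteq> q)"
  show "okw q (v @ u)" unfolding okw_def
  proof (intro allI impI notI)
    fix i m assume h: "i + m + 1 < length (v @ u)" "(v @ u) ! i" "(v @ u) ! (i + m + 1)"
      "\<forall>j. i < j \<longrightarrow> j \<le> i + m \<longrightarrow> \<not> (v @ u) ! j" and q: "odd m = q"
    consider "i + m + 1 < length v" | "length v \<le> i" | "i < length v" "length v \<le> i + m + 1" by linarith
    then show False
    proof cases
      case 1
      have "odd m \<noteq> q"
      proof (rule H[THEN conjunct1, unfolded okw_def, rule_format, of i m])
        show "i + m + 1 < length v" using 1 by simp
        show "v ! i" using h(2) 1 by (simp add: nth_append)
        show "v ! (i + m + 1)" using h(3) 1 by (simp add: nth_append)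
        fix j assume "i < j" "j \<le> i + m"
        then show "\<not> v ! j" using 1 h(4)[rule_format, of j] by (simp add: nth_append)
      qed
      then show False using q by simp
    next
      case 2
      have "odd m \<noteq> q"
      proof (rule H[THEN conjunct2, THEN conjunct1, unfolded okw_def, rule_format, of "i - length v" m])
        show "i - length v + m + 1 < length u" using h 2 by simp
        show "u ! (i - length v)" using h 2 by (simp add: nth_append)
        have "i + m + 1 = length v + (i - length v + m + 1)" using 2 by simp
        then show "u ! (i - length v + m + 1)" using h(3) by (metis nth_append_length_plus)
        fix j assume "i - length v < j" "j \<le> i - length v + m"
        then show "\<not> u ! j" using h(4)[rule_format, of "j + length v"] 2 by (simp add: nth_append)
      qed
      then show False using q by simp
    next
      case 3
      have hv: "has1 v" using h(2) 3 by (auto simp: has1_nth nth_append)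
      have "\<forall>j. i < j \<longrightarrow> j < length v \<longrightarrow> \<not> v ! j"
      proof (intro allI impI)
        fix j assume "i < j" "j < length v"
        then show "\<not> v ! j" using h(4)[rule_format, of j] 3 by (simp add: nth_append)
      qed
      then have tv: "tz v = length v - Suc i"
        using tz_unique[of i v] 3 h(2) by (simp add: nth_append)
      define k where "k = i + m + 1 - length v"
      have kl: "k < length u" using h(1) 3 k_def by simp
      have uk: "u ! k" using h(3) 3 k_def by (simp add: nth_append)
      have "\<forall>j<k. \<not> u ! j"
      proof (intro allI impI)
        fix j assume "j < k"
        then show "\<not> u ! j" using h(4)[rule_format, of "length v + j"] 3 k_def by (simp add: nth_append)
      qed
      then have lu: "lz u = k" using lz_unique kl uk by blast
      have hu: "has1 u" using kl uk by (auto simp: has1_nth)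
      have "tz v + lz u = m" using tv lu k_def 3 by simp
      then show False using H hv hu q by simp
    qed
  qed
qed




lemma okw_one: "okw q [a]"
  unfolding okw_def by auto

lemma okw_rep: "okw q (replicate n False)"
  unfolding okw_def by auto

lemma okw_Nil: "okw q []"
  unfolding okw_def by auto

lemma okw_rep1: "okw q (replicate n False @ [True])"
  using F1[of q "replicate n False" "[True]"] okw_rep okw_one by simp

lemma tz_rep1: "tz (replicate n False @ [True]) = 0"
  unfolding tz_def by simp

lemma okw_Cons: "okw q (a # v) \<longleftrightarrow> okw q v \<and> (a \<and> has1 v \<longrightarrow> odd (lz v) \<noteq> q)"
  using F1[of q "[a]" v] okw_one[of q a] by (auto simp: tz_def)

definition Gm :: "bool \<Rightarrow> nat \<Rightarrow> bool \<Rightarrow> bool list set" where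
  "Gm q l p = {v. okw q v \<and> length v = l \<and> (has1 v \<longrightarrow> (odd (tz v) \<noteq> p) \<noteq> q)}"

definition K :: "bool \<Rightarrow> bool \<Rightarrow> bool list set" where
  "K q p = {v. okw q v \<and> has1 v \<and> odd (lz v) = p}"

definition kw :: "bool \<Rightarrow> bool list" where
  "kw p = replicate (if p then 1 else 0) False @ [True]"

lemma kw_props: "okw q (kw p)" "has1 (kw p)" "odd (lz (kw p)) = p"
  unfolding kw_def using okw_rep1 lz_rep by auto

lemma kw_ok: "okw q (kw p)" and kw_has: "has1 (kw p)" and kw_lz: "odd (lz (kw p)) = p"
  using kw_props by auto

lemma kw_K: "kw p \<in> K q p"
  using kw_props unfolding K_def by auto

lemma K_inj: "K q a = K q b \<Longrightarrow> a = b"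
  using kw_K[of a q] unfolding K_def by auto

lemma K_eq_iff: "K q a = K q b \<longleftrightarrow> a = b"
  using K_inj by auto

lemma Bl_eq: "Bl (Lq q) l = {w. okw q w \<and> length w = l}"
  unfolding Bl_def Bstar_Lq by auto

lemma Gminus_eq: "Gminus (Lq q) l u = {v. okw q v \<and> length v = l \<and> okw q (v @ u)}"
  unfolding Gminus_def Bl_eq Bstar_Lq by auto

lemma Gplus_eq: "Gplus (Lq q) u = {w. okw q (u @ w)}"
  unfolding Gplus_def Bstar_Lq by auto

lemma GM1: "okw q u \<Longrightarrow> has1 u \<Longrightarrow> Gminus (Lq q) l u = Gm q l (odd (lz u))"
  unfolding Gminus_eq Gm_def using F1[of q _ u] by auto

lemma GM0: "okw q u \<Longrightarrow> \<not> has1 u \<Longrightarrow> Gminus (Lq q) l u = {v. okw q v \<and> length v = l}"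
  unfolding Gminus_eq using F1[of q _ u] by auto

definition wit :: "nat \<Rightarrow> bool list" where
  "wit l = replicate (l - 1) False @ [True]"

lemma wit_Gm: "0 < l \<Longrightarrow> wit l \<in> Gm q l p \<longleftrightarrow> p \<noteq> q"
  unfolding Gm_def wit_def using okw_rep1[of q "l - 1"] tz_rep1[of "l - 1"] by auto

lemma Gm_inj: "0 < l \<Longrightarrow> Gm q l a = Gm q l b \<Longrightarrow> a = b"
  using wit_Gm[of l q a] wit_Gm[of l q b] by auto

lemma Gm_eq_iff: "0 < l \<Longrightarrow> Gm q l a = Gm q l b \<longleftrightarrow> a = b"
  using Gm_inj by auto

lemma wit_len: "0 < l \<Longrightarrow> length (wit l) = l"
  by (simp add: wit_def)

lemma Ssync_pos: "0 < l \<Longrightarrow> Ssync (Lq q) l = {u. okw q u \<and> has1 u}"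
proof (intro set_eqI iffI)
  fix u assume l: "0 < l" and u: "u \<in> Ssync (Lq q) l"
  then have ok: "okw q u" and syn: "\<forall>w. okw q (u @ w) \<longrightarrow> Gminus (Lq q) l u = Gminus (Lq q) l (u @ w)"
    unfolding Ssync_def Bstar_Lq Gplus_eq by auto
  have "has1 u"
  proof (rule ccontr)
    assume nh: "\<not> has1 u"
    define r where "r = (if odd (length u) = q then 0 else 1::nat)"
    define w where "w = replicate r False @ [True]"
    have okw: "okw q (u @ w)" using F1[of q u w] ok nh okw_rep1 unfolding w_def by simp
    have hw: "has1 (u @ w)" unfolding w_def by simp
    have lzw: "odd (lz (u @ w)) = q" using nh unfolding w_def r_def by (auto simp: lz_append lz_rep)
    have "Gminus (Lq q) l u = Gm q l q" using syn okw GM1[OF okw hw, of l] lzw by simp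
    moreover have "wit l \<in> Gminus (Lq q) l u" unfolding GM0[OF ok nh, of l]
      using wit_len[OF l] okw_rep1[of q "l - 1"] unfolding wit_def by simp
    ultimately have "wit l \<in> Gm q l q" by simp
    then show False using wit_Gm[OF l] by simp
  qed
  then show "u \<in> {u. okw q u \<and> has1 u}" using ok by simp
next
  fix u assume l: "0 < l" and u: "u \<in> {u. okw q u \<and> has1 u}"
  then have ok: "okw q u" and h: "has1 u" by auto
  show "u \<in> Ssync (Lq q) l" unfolding Ssync_def Bstar_Lq Gplus_eq
  proof (intro CollectI conjI ballI)
    show "okw q u" by fact
    fix w assume "w \<in> {w. okw q (u @ w)}"
    then have okw: "okw q (u @ w)" by simp
    show "Gminus (Lq q) l u = Gminus (Lq q) l (u @ w)"
      using GM1[OF ok h] GM1[OF okw] h by (simp add: lz_append)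
  qed
qed

lemma Gminus0: "Gminus (Lq q) 0 u = (if okw q u then {[]} else {})"
  unfolding Gminus_eq using okw_Nil[of q] by auto

lemma Ssync_0: "Ssync (Lq q) 0 = {u. okw q u}"
  unfolding Ssync_def Bstar_Lq Gplus_eq Gminus0 using okw_Nil[of q] by auto

lemma cls_pos: "0 < l \<Longrightarrow> okw q u \<Longrightarrow> has1 u \<Longrightarrow> cls (Lq q) l u = K q (odd (lz u))"
proof -
  assume l: "0 < l" and u: "okw q u" "has1 u"
  have "cls (Lq q) l u = {v. okw q v \<and> has1 v \<and> Gm q l (odd (lz v)) = Gm q l (odd (lz u))}"
    unfolding cls_def Ssync_pos[OF l] using GM1[OF u, of l] GM1[of q _ l] by auto
  also have "\<dots> = K q (odd (lz u))" unfolding K_def Gm_eq_iff[OF l] by simp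
  finally show ?thesis .
qed

lemma cls_0: "okw q u \<Longrightarrow> cls (Lq q) 0 u = {v. okw q v}"
  unfolding cls_def Ssync_0 Gminus0 using okw_Nil[of q] by auto

lemma Vset_0: "Vset (Lq q) 0 = {{v. okw q v}}"
  unfolding Vset_def Ssync_0 using cls_0[of q] okw_Nil[of q] by auto

lemma Vset_pos: "0 < l \<Longrightarrow> Vset (Lq q) l = range (K q)"
proof (intro set_eqI iffI)
  fix U assume l: "0 < l" "U \<in> Vset (Lq q) l"
  then show "U \<in> range (K q)" unfolding Vset_def Ssync_pos[OF l(1)] using cls_pos[OF l(1)] by auto
next
  fix U assume l: "0 < l" "U \<in> range (K q)"
  then obtain p where p: "U = K q p" by auto
  have "cls (Lq q) l (kw p) = K q p" using cls_pos[OF l(1), of q "kw p"] kw_props by simp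
  moreover have "kw p \<in> Ssync (Lq q) l" using Ssync_pos[OF l(1)] kw_props by auto
  ultimately show "U \<in> Vset (Lq q) l" unfolding Vset_def p by blast
qed

definition V :: "bool \<Rightarrow> bool \<Rightarrow> nat \<Rightarrow> bool list set" where
  "V q p = (\<lambda>l. if l = 0 then {v. okw q v} else K q p)"

lemma V_inj: "V q a = V q b \<Longrightarrow> a = b"
  unfolding V_def using K_inj by (metis One_nat_def one_neq_zero)

lemma OmegaL_eq: "OmegaL (Lq q) = range (V q)"
proof (intro set_eqI iffI)
  fix u assume "u \<in> OmegaL (Lq q)"
  then have a: "\<forall>l. u l \<in> Vset (Lq q) l" and b: "\<forall>l. iota_rel (Lq q) l (u (Suc l)) (u l)"
    unfolding OmegaL_def by auto
  have u0: "u 0 = {v. okw q v}" using a[rule_format, of 0] Vset_0 by auto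
  obtain p where p: "u 1 = K q p" using a[rule_format, of 1] Vset_pos[of 1 q] by auto
  have "u (Suc l) = K q p" for l
  proof (induction l)
    case 0 then show ?case using p by simp
  next
    case (Suc l)
    obtain v where v: "v \<in> Ssync (Lq q) (Suc (Suc l))" "u (Suc (Suc l)) = cls (Lq q) (Suc (Suc l)) v"
      "u (Suc l) = cls (Lq q) (Suc l) v"
      using b[rule_format, of "Suc l"] unfolding iota_rel_def by auto
    have "okw q v" "has1 v" using v(1) Ssync_pos[of "Suc (Suc l)" q] by auto
    then show ?case using v Suc.IH cls_pos[of "Suc l" q v] cls_pos[of "Suc (Suc l)" q v] by simp
  qed
  then have "u = V q p" using u0 unfolding V_def by (auto simp: fun_eq_iff gr0_conv_Suc)
  then show "u \<in> range (V q)" by simp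
next
  fix u assume "u \<in> range (V q)"
  then obtain p where p: "u = V q p" by auto
  have "V q p l \<in> Vset (Lq q) l" for l
    by (cases "l = 0") (auto simp: V_def Vset_0 Vset_pos)
  moreover have "iota_rel (Lq q) l (V q p (Suc l)) (V q p l)" for l
    unfolding iota_rel_def
  proof (intro bexI conjI)
    show "kw p \<in> Ssync (Lq q) (Suc l)" using Ssync_pos[of "Suc l" q] kw_props by auto
    show "V q p (Suc l) = cls (Lq q) (Suc l) (kw p)" using cls_pos[of "Suc l" q "kw p"] kw_props
      by (simp add: V_def)
    show "V q p l = cls (Lq q) l (kw p)" using cls_pos[of l q "kw p"] cls_0[of q "kw p"] kw_props
      by (cases "l = 0") (auto simp: V_def)
  qed
  ultimately show "u \<in> OmegaL (Lq q)" unfolding OmegaL_def p by auto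
qed

definition gedge :: "bool \<Rightarrow> bool \<Rightarrow> bool \<Rightarrow> bool \<Rightarrow> bool" where
  "gedge q p a p' \<longleftrightarrow> (if a then \<not> p \<and> p' = (\<not> q) else p = (\<not> p'))"

lemma edge_Vp: "edge (Lq q) l (V q p l) a (V q p' (Suc l)) \<longleftrightarrow>
   (\<exists>v. okw q v \<and> has1 v \<and> okw q (a # v) \<and> V q p l = cls (Lq q) l (a # v) \<and> K q p' = K q (odd (lz v)))"
  unfolding edge_def Ssync_pos[of "Suc l" q, simplified] Bstar_Lq V_def
  using cls_pos[of "Suc l" q] by auto

lemma EL_V: "(V q p, a, V q p') \<in> EL (Lq q) \<longleftrightarrow> gedge q p a p'"
proof
  assume "(V q p, a, V q p') \<in> EL (Lq q)"
  then have "edge (Lq q) 1 (V q p 1) a (V q p' (Suc 1))" unfolding EL_def by auto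
  then obtain v where v: "okw q v" "has1 v" "okw q (a # v)" "V q p 1 = cls (Lq q) 1 (a # v)"
    "K q p' = K q (odd (lz v))" unfolding edge_Vp by blast
  have p': "p' = odd (lz v)" using K_inj v(5) by blast
  have "K q p = K q (odd (lz (a # v)))" using v(4) cls_pos[of 1 q "a # v"] v(3) v(2) by (simp add: V_def)
  then have p: "p = odd (lz (a # v))" using K_inj by blast
  show "gedge q p a p'"
    using p p' v(3) v(2) unfolding gedge_def okw_Cons by auto
next
  assume g: "gedge q p a p'"
  have "edge (Lq q) l (V q p l) a (V q p' (Suc l))" for l
    unfolding edge_Vp
  proof (intro exI conjI)
    show "okw q (kw p')" "has1 (kw p')" using kw_props by auto
    show "okw q (a # kw p')" using g kw_ok[of q p'] kw_has[of p'] kw_lz[of p'] unfolding okw_Cons gedge_def by (auto split: if_splits)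
    show "K q p' = K q (odd (lz (kw p')))" using kw_props by simp
    have ok: "okw q (a # kw p')" using g kw_ok[of q p'] kw_has[of p'] kw_lz[of p'] unfolding okw_Cons gedge_def by (auto split: if_splits)
    have "odd (lz (a # kw p')) = p" using g kw_ok[of q p'] kw_has[of p'] kw_lz[of p'] unfolding gedge_def by (auto split: if_splits)
    then show "V q p l = cls (Lq q) l (a # kw p')"
      using cls_pos[of l q "a # kw p'"] cls_0[of q "a # kw p'"] ok kw_ok[of q p'] kw_has[of p'] kw_lz[of p']
      by (cases "l = 0") (auto simp: V_def)
  qed
  then show "(V q p, a, V q p') \<in> EL (Lq q)" unfolding EL_def OmegaL_eq by auto
qed

lemma EL_char: "(u, a, w) \<in> EL (Lq q) \<longleftrightarrow> (\<exists>p p'. u = V q p \<and> w = V q p' \<and> gedge q p a p')"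
proof
  assume h: "(u, a, w) \<in> EL (Lq q)"
  then have "u \<in> range (V q)" "w \<in> range (V q)" unfolding EL_def OmegaL_eq by auto
  then obtain p p' where "u = V q p" "w = V q p'" by auto
  then show "\<exists>p p'. u = V q p \<and> w = V q p' \<and> gedge q p a p'" using h EL_V by blast
qed (use EL_V in blast)

definition XLa :: "bool \<Rightarrow> (nat \<Rightarrow> bool \<times> bool) set" where
  "XLa q = {z. (\<exists>s0. gedge q s0 (fst (z 0)) (snd (z 0))) \<and>
     (\<forall>n. gedge q (snd (z n)) (fst (z (Suc n))) (snd (z (Suc n))))}"

definition Enc :: "bool \<Rightarrow> (nat \<Rightarrow> bool \<times> bool) \<Rightarrow> nat \<Rightarrow> bool \<times> (nat \<Rightarrow> bool list set)" where
  "Enc q z = (\<lambda>n. (fst (z n), V q (snd (z n))))"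

definition Dec :: "bool \<Rightarrow> (nat \<Rightarrow> bool \<times> (nat \<Rightarrow> bool list set)) \<Rightarrow> nat \<Rightarrow> bool \<times> bool" where
  "Dec q x = (\<lambda>n. (fst (x n), snd (x n) 1 = K q True))"

lemma V1: "V q p 1 = K q p" by (simp add: V_def)

lemma Dec_Enc: "Dec q (Enc q z) = z"
  unfolding Dec_def Enc_def by (auto simp: fun_eq_iff V_def K_eq_iff)

lemma XL_eq: "XL (Lq q) = Enc q ` XLa q"
proof (intro set_eqI iffI)
  fix x assume x: "x \<in> XL (Lq q)"
  then obtain u0 where h0: "(u0, fst (x 0), snd (x 0)) \<in> EL (Lq q)"
    and hs: "\<forall>n. (snd (x n), fst (x (Suc n)), snd (x (Suc n))) \<in> EL (Lq q)"
    unfolding XL_def by blast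
  have "\<exists>p. snd (x n) = V q p" for n
    using hs[rule_format, of n] unfolding EL_char by blast
  then obtain s where s: "\<And>n. snd (x n) = V q (s n)" by metis
  define z where "z = (\<lambda>n. (fst (x n), s n))"
  have "x = Enc q z" unfolding Enc_def z_def using s by (auto simp: fun_eq_iff prod_eq_iff)
  moreover have "z \<in> XLa q" unfolding XLa_def z_def
  proof (intro CollectI conjI allI)
    obtain p p' where "u0 = V q p" "snd (x 0) = V q p'" "gedge q p (fst (x 0)) p'"
      using h0 unfolding EL_char by blast
    moreover have "s 0 = p'" using s[of 0] V_inj \<open>snd (x 0) = V q p'\<close> by metis
    ultimately show "\<exists>s0. gedge q s0 (fst (fst (x 0), s 0)) (snd (fst (x 0), s 0))"
      by auto
    fix n
    obtain p p' where "snd (x n) = V q p" "snd (x (Suc n)) = V q p'" "gedge q p (fst (x (Suc n))) p'"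
      using hs[rule_format, of n] unfolding EL_char by blast
    moreover have "s n = p" using s[of n] V_inj \<open>snd (x n) = V q p\<close> by metis
    moreover have "s (Suc n) = p'" using s[of "Suc n"] V_inj \<open>snd (x (Suc n)) = V q p'\<close> by metis
    ultimately show "gedge q (snd (fst (x n), s n)) (fst (fst (x (Suc n)), s (Suc n))) (snd (fst (x (Suc n)), s (Suc n)))"
      by simp
  qed
  ultimately show "x \<in> Enc q ` XLa q" by blast
next
  fix x assume "x \<in> Enc q ` XLa q"
  then obtain z where z: "z \<in> XLa q" "x = Enc q z" by blast
  obtain s0 where s0: "gedge q s0 (fst (z 0)) (snd (z 0))" using z(1) unfolding XLa_def by blast
  show "x \<in> XL (Lq q)" unfolding XL_def
  proof (intro CollectI exI conjI allI)
    show "(V q s0, fst (x 0), snd (x 0)) \<in> EL (Lq q)" using s0 z(2) EL_V by (simp add: Enc_def)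
    fix n show "(snd (x n), fst (x (Suc n)), snd (x (Suc n))) \<in> EL (Lq q)"
      using z EL_V unfolding XLa_def by (simp add: Enc_def)
  qed
qed




fun hl :: "(nat \<Rightarrow> bool \<times> bool) \<Rightarrow> nat \<Rightarrow> bool \<times> bool" where
  "hl z 0 = (if fst (z 0) then (True, True) else z 0)"
| "hl z (Suc 0) = (if fst (z 0) then (False, snd (z 0)) else hl (shiftn 1 z) 0)"
| "hl z (Suc (Suc m)) = (if fst (z 0) then hl (shiftn 1 z) m else hl (shiftn 1 z) (Suc m))"

fun gl :: "(nat \<Rightarrow> bool \<times> bool) \<Rightarrow> nat \<Rightarrow> bool \<times> bool" where
  "gl w 0 = (if fst (w 0) then (True, snd (w 1)) else w 0)"
| "gl w (Suc n) = gl (shiftn (if fst (w 0) then 2 else 1) w) n"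

lemma shiftn_apply: "shiftn k x n = x (n + k)"
  by (simp add: shiftn_def)

lemma shiftn_shiftn[simp]: "shiftn a (shiftn b x) = shiftn (a + b) x"
  by (simp add: shiftn_def fun_eq_iff add.assoc)

lemma hl_shift: "shiftn (if fst (z 0) then 2 else 1) (hl z) = hl (shiftn 1 z)"
proof (rule ext)
  fix n
  show "shiftn (if fst (z 0) then 2 else 1) (hl z) n = hl (shiftn 1 z) n"
    by (cases n) (auto simp: numeral_2_eq_2 shiftn_apply)
qed

lemma XLa_shift: "z \<in> XLa q \<Longrightarrow> shiftn k z \<in> XLa q"
proof -
  assume z: "z \<in> XLa q"
  then have st: "\<exists>s0. gedge q s0 (fst (z 0)) (snd (z 0))"
    and ch: "\<forall>n. gedge q (snd (z n)) (fst (z (Suc n))) (snd (z (Suc n)))"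
    unfolding XLa_def by auto
  have "\<exists>s0. gedge q s0 (fst (shiftn k z 0)) (snd (shiftn k z 0))"
  proof (cases k)
    case 0 then show ?thesis using st by (simp add: shiftn_apply)
  next
    case (Suc k') then show ?thesis using ch[rule_format, of k'] by (auto simp: shiftn_apply)
  qed
  moreover have "\<forall>n. gedge q (snd (shiftn k z n)) (fst (shiftn k z (Suc n))) (snd (shiftn k z (Suc n)))"
    using ch by (simp add: shiftn_apply)
  ultimately show ?thesis unfolding XLa_def by blast
qed

lemma gl_shift: "shiftn 1 (gl w) = gl (shiftn (if fst (w 0) then 2 else 1) w)"
  by (rule ext) (simp add: shiftn_apply del: gl.simps(1))

lemma XLa_start: "z \<in> XLa q \<Longrightarrow> fst (z 0) \<Longrightarrow> snd (z 0) = (\<not> q)"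
  unfolding XLa_def gedge_def by auto

lemma XLa_step: "z \<in> XLa q \<Longrightarrow> gedge q (snd (z n)) (fst (z (Suc n))) (snd (z (Suc n)))"
  unfolding XLa_def by auto

lemma XLa_stepT: "z \<in> XLa q \<Longrightarrow> fst (z (Suc n)) \<Longrightarrow> snd (z n) = False \<and> snd (z (Suc n)) = (\<not> q)"
  using XLa_step[of z q n] unfolding gedge_def by auto

lemma XLa_stepF: "z \<in> XLa q \<Longrightarrow> \<not> fst (z (Suc n)) \<Longrightarrow> snd (z n) = (\<not> snd (z (Suc n)))"
  using XLa_step[of z q n] unfolding gedge_def by auto

lemma XLa_I: "(\<exists>s0. gedge q s0 (fst (z 0)) (snd (z 0))) \<Longrightarrow>
   (\<And>n. gedge q (snd (z n)) (fst (z (Suc n))) (snd (z (Suc n)))) \<Longrightarrow> z \<in> XLa q"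
  unfolding XLa_def by auto

lemma hl_chain: "z \<in> XLa True \<Longrightarrow> gedge False (snd (hl z n)) (fst (hl z (Suc n))) (snd (hl z (Suc n)))"
proof (induction n arbitrary: z rule: less_induct)
  case (less n)
  have z: "z \<in> XLa True" by fact
  have z1: "shiftn 1 z \<in> XLa True" using XLa_shift[OF z] .
  show ?case
  proof (cases n)
    case 0
    show ?thesis
    proof (cases "fst (z 0)")
      case True
      then show ?thesis using 0 XLa_start[OF z] by (simp add: gedge_def)
    next
      case False
      then show ?thesis using 0 XLa_stepT[OF z, of 0] XLa_stepF[OF z, of 0]
        by (cases "fst (z 1)") (auto simp: gedge_def shiftn_apply)
    qed
  next
    case (Suc m)
    show ?thesis
    proof (cases m)
      case 0
      show ?thesis
      proof (cases "fst (z 0)")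
        case True
        then show ?thesis using Suc 0 XLa_start[OF z] XLa_stepT[OF z, of 0] XLa_stepF[OF z, of 0]
          by (cases "fst (z 1)") (auto simp: gedge_def shiftn_apply)
      next
        case False
        then show ?thesis using Suc 0 less.IH[of 0 "shiftn 1 z"] z1 by simp
      qed
    next
      case (Suc k)
      show ?thesis
      proof (cases "fst (z 0)")
        case True
        then show ?thesis using \<open>n = Suc m\<close> Suc less.IH[of k "shiftn 1 z"] z1 by simp
      next
        case False
        then show ?thesis using \<open>n = Suc m\<close> Suc less.IH[of "Suc k" "shiftn 1 z"] z1 by simp
      qed
    qed
  qed
qed

lemma hl_XLa: "z \<in> XLa True \<Longrightarrow> hl z \<in> XLa False"
proof (rule XLa_I)
  assume z: "z \<in> XLa True"
  show "\<exists>s0. gedge False s0 (fst (hl z 0)) (snd (hl z 0))"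
    by (cases "fst (z 0)") (auto simp: gedge_def)
  fix n show "gedge False (snd (hl z n)) (fst (hl z (Suc n))) (snd (hl z (Suc n)))"
    using hl_chain[OF z] .
qed

lemma gl_hl: "gl (hl z) = z"
proof (rule ext)
  fix n show "gl (hl z) n = z n"
  proof (induction n arbitrary: z)
    case 0 then show ?case by (cases "fst (z 0)") (auto simp: One_nat_def prod_eq_iff)
  next
    case (Suc n)
    have "gl (hl z) (Suc n) = gl (shiftn (if fst (z 0) then 2 else 1) (hl z)) n"
      by (cases "fst (z 0)") auto
    also have "\<dots> = gl (hl (shiftn 1 z)) n" using hl_shift by metis
    also have "\<dots> = z (Suc n)" using Suc by (simp add: shiftn_apply)
    finally show ?case .
  qed
qed

lemma hl_gl: "w \<in> XLa False \<Longrightarrow> hl (gl w) = w"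
proof (rule ext)
  fix n assume w: "w \<in> XLa False"
  then show "hl (gl w) n = w n"
  proof (induction n arbitrary: w rule: less_induct)
    case (less n)
    have w: "w \<in> XLa False" by fact
    show ?case
    proof (cases n)
      case 0 then show ?thesis using XLa_start[OF w] by (cases "fst (w 0)") (auto simp: prod_eq_iff)
    next
      case (Suc m)
      show ?thesis
      proof (cases "fst (w 0)")
        case True
        have w1: "\<not> fst (w 1)" using XLa_start[OF w] XLa_stepT[OF w, of 0] True by auto
        show ?thesis
        proof (cases m)
          case 0 then show ?thesis using Suc True w1 by (auto simp: prod_eq_iff)
        next
          case (Suc k)
          have "hl (gl w) n = hl (shiftn 1 (gl w)) k" using \<open>n = Suc m\<close> Suc True w1
            by (simp add: shiftn_apply)
          also have "shiftn 1 (gl w) = gl (shiftn 2 w)" using gl_shift[of w] True by simp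
          finally have "hl (gl w) n = hl (gl (shiftn 2 w)) k" .
          also have "\<dots> = shiftn 2 w k" using less.IH[of k "shiftn 2 w"] XLa_shift[OF w] \<open>n = Suc m\<close> Suc
            by simp
          finally show ?thesis using \<open>n = Suc m\<close> Suc by (simp add: numeral_2_eq_2 shiftn_apply)
        qed
      next
        case False
        have "hl (gl w) n = hl (shiftn 1 (gl w)) m"
          using \<open>n = Suc m\<close> False by (cases m) (auto simp: shiftn_apply)
        also have "shiftn 1 (gl w) = gl (shiftn 1 w)" using gl_shift[of w] False by simp
        finally have "hl (gl w) n = hl (gl (shiftn 1 w)) m" .
        also have "\<dots> = shiftn 1 w m" using less.IH[of m "shiftn 1 w"] XLa_shift[OF w] \<open>n = Suc m\<close>
          by simp
        finally show ?thesis using \<open>n = Suc m\<close> by (simp add: shiftn_apply)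
      qed
    qed
  qed
qed

lemma gl_0: "w \<in> XLa False \<Longrightarrow> gedge True (snd (gl w 0)) (fst (gl w 1)) (snd (gl w 1))"
proof (cases "fst (w 0)")
  case True
  assume w: "w \<in> XLa False"
  have s0: "snd (w 0)" using XLa_start[OF w True] by simp
  have w1: "\<not> fst (w 1)" "\<not> snd (w 1)" using XLa_stepT[OF w, of 0] XLa_stepF[OF w, of 0] s0 by auto
  have "gl w 1 = gl (shiftn 2 w) 0" using True by (simp add: One_nat_def)
  then show ?thesis using True w1 XLa_stepT[OF w, of 1] XLa_stepF[OF w, of 1]
    XLa_stepT[OF w, of 2] XLa_stepF[OF w, of 2]
    by (cases "fst (w 2)") (auto simp: gedge_def numeral_2_eq_2 shiftn_apply)
next
  case False
  assume w: "w \<in> XLa False"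
  have "gl w 1 = gl (shiftn 1 w) 0" using False by (simp add: One_nat_def)
  then show ?thesis using False XLa_stepT[OF w, of 0] XLa_stepF[OF w, of 0]
    XLa_stepT[OF w, of 1] XLa_stepF[OF w, of 1]
    by (cases "fst (w 1)") (auto simp: gedge_def numeral_2_eq_2 shiftn_apply)
qed

lemma gl_chain: "w \<in> XLa False \<Longrightarrow> gedge True (snd (gl w n)) (fst (gl w (Suc n))) (snd (gl w (Suc n)))"
proof (induction n arbitrary: w)
  case 0 then show ?case using gl_0 by (simp add: One_nat_def)
next
  case (Suc n)
  have "shiftn (if fst (w 0) then 2 else 1) w \<in> XLa False" using XLa_shift Suc.prems by blast
  then show ?case using Suc.IH by (simp only: gl.simps(2))
qed

lemma gl_XLa: "w \<in> XLa False \<Longrightarrow> gl w \<in> XLa True"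
proof (rule XLa_I)
  assume w: "w \<in> XLa False"
  show "\<exists>s0. gedge True s0 (fst (gl w 0)) (snd (gl w 0))"
  proof (cases "fst (w 0)")
    case True
    have s0: "snd (w 0)" using XLa_start[OF w True] by simp
    have "\<not> snd (w 1)" using XLa_stepT[OF w, of 0] XLa_stepF[OF w, of 0] s0 by auto
    then show ?thesis using True by (auto simp: gedge_def)
  qed (auto simp: gedge_def)
  fix n show "gedge True (snd (gl w n)) (fst (gl w (Suc n))) (snd (gl w (Suc n)))"
    using gl_chain[OF w] .
qed




definition hlab :: "(nat \<Rightarrow> bool) \<Rightarrow> nat \<Rightarrow> bool" where
  "hlab a = (\<lambda>n. fst (hl (\<lambda>k. (a k, False)) n))"

definition glab :: "(nat \<Rightarrow> bool) \<Rightarrow> nat \<Rightarrow> bool" where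
  "glab a = (\<lambda>n. fst (gl (\<lambda>k. (a k, False)) n))"

lemma hl_fst_cong: "(\<And>k. fst (z k) = fst (z' k)) \<Longrightarrow> fst (hl z n) = fst (hl z' n)"
proof (induction n arbitrary: z z' rule: less_induct)
  case (less n)
  have e0: "fst (z 0) = fst (z' 0)" using less.prems by blast
  have es: "\<And>k. fst (shiftn 1 z k) = fst (shiftn 1 z' k)" using less.prems by (simp add: shiftn_apply)
  have ih: "\<And>y. y < n \<Longrightarrow> fst (hl (shiftn 1 z) y) = fst (hl (shiftn 1 z') y)"
    using less.IH es by blast
  show ?case
  proof (cases n)
    case 0 then show ?thesis using e0 by simp
  next
    case (Suc m)
    show ?thesis
    proof (cases m)
      case 0 then show ?thesis using Suc e0 ih[of 0] by simp
    next
      case (Suc k)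
      then show ?thesis using \<open>n = Suc m\<close> e0 ih[of k] ih[of "Suc k"] by simp
    qed
  qed
qed

lemma gl_fst_cong: "(\<And>k. fst (z k) = fst (z' k)) \<Longrightarrow> fst (gl z n) = fst (gl z' n)"
proof (induction n arbitrary: z z')
  case 0 then show ?case by simp
next
  case (Suc n)
  have e0: "fst (z 0) = fst (z' 0)" using Suc.prems by blast
  define c where "c = (if fst (z 0) then 2 else 1::nat)"
  have "\<And>k. fst (shiftn c z k) = fst (shiftn c z' k)" using Suc.prems by (simp add: shiftn_apply)
  then have "fst (gl (shiftn c z) n) = fst (gl (shiftn c z') n)" using Suc.IH by blast
  then show ?case using e0 unfolding c_def by simp
qed

lemma hl_fst: "fst (hl z n) = hlab (\<lambda>k. fst (z k)) n"
  unfolding hlab_def by (rule hl_fst_cong) simp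

lemma gl_fst: "fst (gl z n) = glab (\<lambda>k. fst (z k)) n"
  unfolding glab_def by (rule gl_fst_cong) simp

lemma path_oks: "z \<in> XLa q \<Longrightarrow> oks q (\<lambda>n. fst (z n))"
  unfolding oks_def
proof (intro allI impI notI)
  fix i m assume z: "z \<in> XLa q" and h: "fst (z i)" "fst (z (i + m + 1))"
    "\<forall>j. i < j \<longrightarrow> j \<le> i + m \<longrightarrow> \<not> fst (z j)" and q: "odd m = q"
  have si: "snd (z i) = (\<not> q)"
  proof (cases i)
    case 0 then show ?thesis using XLa_start[OF z] h by simp
  next
    case (Suc i') then show ?thesis using XLa_stepT[OF z, of i'] h by simp
  qed
  have "d \<le> m \<Longrightarrow> snd (z (i + d)) = ((\<not> q) \<noteq> odd d)" for d
  proof (induction d)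
    case 0 then show ?case using si by simp
  next
    case (Suc d)
    have "\<not> fst (z (Suc (i + d)))" using h(3)[rule_format, of "Suc (i + d)"] Suc.prems by simp
    then show ?case using XLa_stepF[OF z, of "i + d"] Suc by auto
  qed
  then have "snd (z (i + m)) = ((\<not> q) \<noteq> odd m)" by simp
  moreover have "snd (z (i + m)) = False" using XLa_stepT[OF z, of "i + m"] h(2) by simp
  ultimately show False using q by simp
qed

lemma oks_path: "oks q a \<Longrightarrow> \<exists>s. (\<lambda>n. (a n, s n)) \<in> XLa q"
proof -
  assume ok: "oks q a"
  define s0 where "s0 = (if a 0 then \<not> q else (if \<exists>k. a k then odd ((LEAST k. a k) - 1) else False))"
  define s where "s = rec_nat s0 (\<lambda>n r. if a (Suc n) then \<not> q else \<not> r)"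
  have s_0: "s 0 = s0" and s_Suc: "\<And>n. s (Suc n) = (if a (Suc n) then \<not> q else \<not> s n)"
    unfolding s_def by simp_all
  have La: "(\<forall>k\<le>n. \<not> a k) \<Longrightarrow> s n = (s0 \<noteq> odd n)" for n
    by (induction n) (auto simp: s_0 s_Suc)
  have Lb: "a j \<Longrightarrow> (\<forall>k. j < k \<and> k \<le> j + d \<longrightarrow> \<not> a k) \<Longrightarrow> s (j + d) = ((\<not> q) \<noteq> odd d)" for j d
  proof (induction d)
    case 0 then show ?case by (cases j) (auto simp: s_0 s_Suc s0_def)
  next
    case (Suc d)
    then have "\<not> a (Suc (j + d))" by auto
    then show ?case using Suc by (auto simp: s_Suc)
  qed
  have key: "a (Suc n) \<Longrightarrow> s n = False" for n
  proof -
    assume an: "a (Suc n)"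
    show ?thesis
    proof (cases "\<exists>j\<le>n. a j")
      case True
      define J where "J = {j. j \<le> n \<and> a j}"
      have fin: "finite J" "J \<noteq> {}" using True unfolding J_def by auto
      define j where "j = Max J"
      have jJ: "j \<in> J" using fin unfolding j_def by simp
      have jmax: "\<And>k. k \<in> J \<Longrightarrow> k \<le> j" using fin unfolding j_def by simp
      have jn: "j \<le> n" "a j" using jJ unfolding J_def by auto
      have after: "\<forall>k. j < k \<and> k \<le> j + (n - j) \<longrightarrow> \<not> a k"
        using jmax jn unfolding J_def by force
      have "s n = ((\<not> q) \<noteq> odd (n - j))" using Lb[OF jn(2) after] jn by simp
      moreover have "odd (n - j) \<noteq> q"
      proof (rule ok[unfolded oks_def, rule_format, of j "n - j"])
        show "a j" by fact
        show "a (j + (n - j) + 1)" using an jn by simp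
        show "\<And>k. j < k \<Longrightarrow> k \<le> j + (n - j) \<Longrightarrow> \<not> a k" using after by blast
      qed
      ultimately show ?thesis by auto
    next
      case False
      then have "(LEAST k. a k) = Suc n" using an by (intro Least_equality) (auto simp: not_less_eq_eq[symmetric])
      moreover have "\<not> a 0" using False by auto
      ultimately have "s0 = odd n" unfolding s0_def using an by auto
      then show ?thesis using La[of n] False by auto
    qed
  qed
  have "(\<lambda>n. (a n, s n)) \<in> XLa q"
  proof (rule XLa_I)
    show "\<exists>s0'. gedge q s0' (fst (a 0, s 0)) (snd (a 0, s 0))"
      by (cases "a 0") (auto simp: gedge_def s_0 s0_def)
    fix n show "gedge q (snd (a n, s n)) (fst (a (Suc n), s (Suc n))) (snd (a (Suc n), s (Suc n)))"
      using key[of n] by (auto simp: gedge_def s_Suc)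
  qed
  then show ?thesis by blast
qed

lemma hlab_oks: "oks True a \<Longrightarrow> oks False (hlab a)"
proof -
  assume "oks True a"
  then obtain s where z: "(\<lambda>n. (a n, s n)) \<in> XLa True" using oks_path by blast
  have "oks False (\<lambda>n. fst (hl (\<lambda>n. (a n, s n)) n))" using path_oks hl_XLa[OF z] by blast
  then show ?thesis unfolding hl_fst by simp
qed

lemma glab_oks: "oks False a \<Longrightarrow> oks True (glab a)"
proof -
  assume "oks False a"
  then obtain s where z: "(\<lambda>n. (a n, s n)) \<in> XLa False" using oks_path by blast
  have "oks True (\<lambda>n. fst (gl (\<lambda>n. (a n, s n)) n))" using path_oks gl_XLa[OF z] by blast
  then show ?thesis unfolding gl_fst by simp
qed

lemma glab_hlab: "glab (hlab a) = a"
proof (rule ext)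
  fix n
  have "glab (hlab a) n = fst (gl (hl (\<lambda>k. (a k, False))) n)"
    unfolding gl_fst hl_fst by simp
  then show "glab (hlab a) n = a n" unfolding gl_hl by simp
qed

lemma hlab_glab: "oks False a \<Longrightarrow> hlab (glab a) = a"
proof (rule ext)
  fix n assume "oks False a"
  then obtain s where z: "(\<lambda>n. (a n, s n)) \<in> XLa False" using oks_path by blast
  have "hlab (glab a) n = fst (hl (gl (\<lambda>n. (a n, s n))) n)"
    unfolding gl_fst hl_fst by simp
  then show "hlab (glab a) n = a n" unfolding hl_gl[OF z] by simp
qed




abbreviation DZ :: "(nat \<Rightarrow> 'a) topology" where
  "DZ \<equiv> product_topology (\<lambda>_. discrete_topology UNIV) UNIV"

abbreviation TX :: "(nat \<Rightarrow> 'a \<times> (nat \<Rightarrow> 'b)) topology" where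
  "TX \<equiv> product_topology (\<lambda>_. prod_topology (discrete_topology UNIV)
         (product_topology (\<lambda>_. discrete_topology UNIV) UNIV)) UNIV"

lemma topspace_DZ[simp]: "topspace DZ = UNIV"
  by auto

lemma topspace_TX[simp]: "topspace TX = UNIV"
  by auto

lemma fin_dep_cont:
  fixes F :: "(nat \<Rightarrow> 'a) \<Rightarrow> 'b"
  assumes dep: "\<And>z z'. (\<forall>k<N. z k = z' k) \<Longrightarrow> F z = F z'"
  shows "continuous_map DZ (discrete_topology UNIV) F"
  unfolding continuous_map
proof (intro conjI allI impI)
  show "F ` topspace DZ \<subseteq> topspace (discrete_topology UNIV)" by simp
  fix U :: "'b set"
  show "openin DZ {x \<in> topspace DZ. F x \<in> U}"
  proof (subst openin_subopen, intro ballI)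
    fix x assume x: "x \<in> {x \<in> topspace DZ. F x \<in> U}"
    define T where "T = (\<Pi>\<^sub>E k\<in>(UNIV::nat set). (if k < N then {x k} else UNIV))"
    have "openin DZ T" unfolding T_def
    proof (rule product_topology_basis)
      show "\<And>i. openin (discrete_topology UNIV) (if i < N then {x i} else UNIV)" by simp
      have "{i. (if i < N then {x i} else UNIV) \<noteq> topspace (discrete_topology UNIV)} \<subseteq> {..<N}"
        by auto
      then show "finite {i. (if i < N then {x i} else UNIV) \<noteq> topspace (discrete_topology UNIV)}"
        using finite_subset by blast
    qed
    moreover have "x \<in> T" unfolding T_def by auto
    moreover have "T \<subseteq> {x \<in> topspace DZ. F x \<in> U}"
    proof
      fix y assume "y \<in> T"
      then have "\<forall>k. y k \<in> (if k < N then {x k} else UNIV)" unfolding T_def by (simp add: PiE_iff)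
      then have "\<forall>k<N. y k = x k" by (metis singletonD)
      then have "F y = F x" using dep by metis
      then show "y \<in> {x \<in> topspace DZ. F x \<in> U}" using x by simp
    qed
    ultimately show "\<exists>T. openin DZ T \<and> x \<in> T \<and> T \<subseteq> {x \<in> topspace DZ. F x \<in> U}" by blast
  qed
qed

lemma fin_dep_cont_DZ:
  fixes F :: "(nat \<Rightarrow> 'a) \<Rightarrow> nat \<Rightarrow> 'b"
  assumes dep: "\<And>n. \<exists>N. \<forall>z z'. (\<forall>k<N. z k = z' k) \<longrightarrow> F z n = F z' n"
  shows "continuous_map DZ DZ F"
  unfolding continuous_map_componentwise_UNIV
proof
  fix n
  obtain N where "\<forall>z z'. (\<forall>k<N. z k = z' k) \<longrightarrow> F z n = F z' n" using dep by blast
  then show "continuous_map DZ (discrete_topology UNIV) (\<lambda>x. F x n)"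
    by (intro fin_dep_cont[of N]) blast
qed

lemma hl_dep: "(\<forall>k\<le>n. z k = z' k) \<Longrightarrow> hl z n = hl z' n"
proof (induction n arbitrary: z z' rule: less_induct)
  case (less n)
  have e0: "z 0 = z' 0" using less.prems by blast
  have ih: "\<And>y. y < n \<Longrightarrow> hl (shiftn 1 z) y = hl (shiftn 1 z') y"
  proof -
    fix y assume y: "y < n"
    have "\<forall>k\<le>y. shiftn 1 z k = shiftn 1 z' k" using less.prems y by (simp add: shiftn_apply)
    then show "hl (shiftn 1 z) y = hl (shiftn 1 z') y" using less.IH y by blast
  qed
  show ?case
  proof (cases n)
    case 0 then show ?thesis using e0 by simp
  next
    case (Suc m)
    show ?thesis
    proof (cases m)
      case 0 then show ?thesis using Suc e0 ih[of 0] by simp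
    next
      case (Suc k)
      then show ?thesis using \<open>n = Suc m\<close> e0 ih[of k] ih[of "Suc k"] by simp
    qed
  qed
qed

lemma gl_dep: "(\<forall>k\<le>2*n+1. w k = w' k) \<Longrightarrow> gl w n = gl w' n"
proof (induction n arbitrary: w w')
  case 0
  then have "w 0 = w' 0" "w 1 = w' 1" by auto
  then show ?case by simp
next
  case (Suc n)
  have e0: "w 0 = w' 0" using Suc.prems by auto
  define c where "c = (if fst (w 0) then 2 else 1::nat)"
  have "\<forall>k\<le>2*n+1. shiftn c w k = shiftn c w' k" using Suc.prems unfolding c_def
    by (auto simp: shiftn_apply)
  then have "gl (shiftn c w) n = gl (shiftn c w') n" using Suc.IH by blast
  then show ?case using e0 unfolding c_def by simp
qed

lemma cont_hl: "continuous_map DZ DZ hl"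
  by (rule fin_dep_cont_DZ) (use hl_dep in \<open>metis less_Suc_eq_le\<close>)

lemma cont_gl: "continuous_map DZ DZ gl"
proof (rule fin_dep_cont_DZ)
  fix n show "\<exists>N. \<forall>z z'. (\<forall>k<N. z k = z' k) \<longrightarrow> gl z n = gl z' n"
    by (rule exI[of _ "2*n+2"]) (use gl_dep in \<open>auto\<close>)
qed

lemma cont_hlab: "continuous_map DZ DZ hlab"
proof (rule fin_dep_cont_DZ)
  fix n show "\<exists>N. \<forall>z z'. (\<forall>k<N. z k = z' k) \<longrightarrow> hlab z n = hlab z' n"
    unfolding hlab_def
  proof (intro exI[of _ "Suc n"] allI impI)
    fix z z' :: "nat \<Rightarrow> bool" assume "\<forall>k<Suc n. z k = z' k"
    then have "hl (\<lambda>k. (z k, False)) n = hl (\<lambda>k. (z' k, False)) n" by (intro hl_dep) auto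
    then show "fst (hl (\<lambda>k. (z k, False)) n) = fst (hl (\<lambda>k. (z' k, False)) n)" by simp
  qed
qed

lemma cont_glab: "continuous_map DZ DZ glab"
proof (rule fin_dep_cont_DZ)
  fix n show "\<exists>N. \<forall>z z'. (\<forall>k<N. z k = z' k) \<longrightarrow> glab z n = glab z' n"
    unfolding glab_def
  proof (intro exI[of _ "2*n+2"] allI impI)
    fix z z' :: "nat \<Rightarrow> bool" assume "\<forall>k<2*n+2. z k = z' k"
    then have "gl (\<lambda>k. (z k, False)) n = gl (\<lambda>k. (z' k, False)) n" by (intro gl_dep) auto
    then show "fst (gl (\<lambda>k. (z k, False)) n) = fst (gl (\<lambda>k. (z' k, False)) n)" by simp
  qed
qed

lemma cont_coord_fst: "continuous_map TX (discrete_topology UNIV) (\<lambda>x. fst (x n))"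
proof -
  have "continuous_map TX (prod_topology (discrete_topology UNIV) (product_topology (\<lambda>_. discrete_topology UNIV) UNIV)) (\<lambda>x. x n)"
    by (rule continuous_map_product_projection) simp
  then show ?thesis using continuous_map_compose[OF _ continuous_map_fst] by (auto simp: o_def)
qed

lemma cont_coord_snd: "continuous_map TX (discrete_topology UNIV) (\<lambda>x. snd (x n) l)"
proof -
  have "continuous_map TX (prod_topology (discrete_topology UNIV) (product_topology (\<lambda>_. discrete_topology UNIV) UNIV)) (\<lambda>x. x n)"
    by (rule continuous_map_product_projection) simp
  then have "continuous_map TX (product_topology (\<lambda>_. discrete_topology UNIV) UNIV) (\<lambda>x. snd (x n))"
    using continuous_map_compose[OF _ continuous_map_snd] by (auto simp: o_def)
  moreover have "continuous_map (product_topology (\<lambda>_. discrete_topology UNIV) UNIV) (discrete_topology UNIV) (\<lambda>f. f l)"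
    by (rule continuous_map_product_projection) simp
  ultimately show ?thesis using continuous_map_compose by (auto simp: o_def)
qed

lemma cont_Dec: "continuous_map TX DZ (Dec q)"
  unfolding continuous_map_componentwise_UNIV
proof
  fix n
  have "continuous_map TX (prod_topology (discrete_topology UNIV) (discrete_topology UNIV))
      (\<lambda>x. (fst (x n), snd (x n) 1))"
    by (intro continuous_map_pairedI cont_coord_fst cont_coord_snd)
  then have c: "continuous_map TX (discrete_topology UNIV) (\<lambda>x. (fst (x n), snd (x n) 1))"
    by (simp flip: prod_topology_discrete_topology)
  have d: "continuous_map (discrete_topology UNIV) (discrete_topology UNIV)
      (\<lambda>p::bool \<times> bool list set. (fst p, snd p = K q True))" by simp
  show "continuous_map TX (discrete_topology UNIV) (\<lambda>x. Dec q x n)"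
    using continuous_map_compose[OF c d] unfolding Dec_def by (simp add: o_def)
qed

lemma cont_Enc: "continuous_map DZ TX (Enc q)"
  unfolding continuous_map_componentwise_UNIV
proof
  fix n
  have c: "continuous_map DZ (discrete_topology UNIV) (\<lambda>z::nat \<Rightarrow> bool \<times> bool. z n)"
    by (rule continuous_map_product_projection) simp
  have d: "continuous_map (discrete_topology UNIV)
      (prod_topology (discrete_topology UNIV) (product_topology (\<lambda>_. discrete_topology UNIV) UNIV))
      (\<lambda>p::bool \<times> bool. (fst p, V q (snd p)))" by simp
  show "continuous_map DZ (prod_topology (discrete_topology UNIV) (product_topology (\<lambda>_. discrete_topology UNIV) UNIV)) (\<lambda>x. Enc q x n)"
    using continuous_map_compose[OF c d] unfolding Enc_def by (simp add: o_def)
qed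


lemma shiftn_0[simp]: "shiftn 0 x = x"
  by (simp add: shiftn_def)

lemma Dec_shift: "Dec q (shiftn k x) = shiftn k (Dec q x)"
  by (simp add: Dec_def shiftn_def)

lemma Enc_shift: "Enc q (shiftn k z) = shiftn k (Enc q z)"
  by (simp add: Enc_def shiftn_def)

lemma fst_Dec: "fst (Dec q x n) = fst (x n)"
  by (simp add: Dec_def)

lemma topspace_topXL: "topspace (topXL L) = XL L"
  unfolding topXL_def by simp

lemma topspace_topXLam: "topspace (topXLam L) = XLam L"
  unfolding topXLam_def by simp

lemma Dec_XL: "y \<in> XL (Lq q) \<Longrightarrow> Dec q y \<in> XLa q \<and> y = Enc q (Dec q y)"
  unfolding XL_eq using Dec_Enc by auto

lemma cont_subXL: "continuous_map TX TX f \<Longrightarrow> (\<And>x. x \<in> XL L \<Longrightarrow> f x \<in> XL L')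
  \<Longrightarrow> continuous_map (topXL L) (topXL L') f"
  unfolding topXL_def
  by (rule continuous_map_into_subtopology) (auto intro: continuous_map_from_subtopology)

lemma cont_nat_XL: "continuous_map (topXL L) (discrete_topology (UNIV::nat set)) (\<lambda>x. if fst (x 0) then a else b)"
proof -
  have c: "continuous_map (topXL L) (discrete_topology UNIV) (\<lambda>x. fst (x 0))"
    unfolding topXL_def by (rule continuous_map_from_subtopology) (rule cont_coord_fst)
  have d: "continuous_map (discrete_topology UNIV) (discrete_topology (UNIV::nat set)) (\<lambda>p::bool. if p then a else b)"
    by simp
  show ?thesis using continuous_map_compose[OF c d] by (simp add: o_def)
qed

theorem corollary6p9:
  shows "coe even_shift odd_shift"
proof -
  define hL where "hL = (\<lambda>x. Enc False (hl (Dec True x)))"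
  define hLi where "hLi = (\<lambda>y. Enc True (gl (Dec False y)))"
  have cL: "continuous_map TX TX hL" unfolding hL_def
    using continuous_map_compose[OF continuous_map_compose[OF cont_Dec cont_hl] cont_Enc] by (simp add: o_def)
  have cLi: "continuous_map TX TX hLi" unfolding hLi_def
    using continuous_map_compose[OF continuous_map_compose[OF cont_Dec cont_gl] cont_Enc] by (simp add: o_def)
  have mapL: "hL x \<in> XL (Lq False)" if "x \<in> XL (Lq True)" for x
    using Dec_XL[OF that] hl_XLa unfolding hL_def XL_eq by blast
  have mapLi: "hLi y \<in> XL (Lq True)" if "y \<in> XL (Lq False)" for y
    using Dec_XL[OF that] gl_XLa unfolding hLi_def XL_eq by blast
  have invL: "hLi (hL x) = x" if "x \<in> XL (Lq True)" for x
    using Dec_XL[OF that] unfolding hL_def hLi_def Dec_Enc gl_hl by simp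
  have invLi: "hL (hLi y) = y" if "y \<in> XL (Lq False)" for y
    using Dec_XL[OF that] hl_gl unfolding hL_def hLi_def Dec_Enc by simp
  have H1: "homeomorphic_maps (topXL (Lq True)) (topXL (Lq False)) hL hLi"
    unfolding homeomorphic_maps_def topspace_topXL
    using cont_subXL[OF cL mapL] cont_subXL[OF cLi mapLi] invL invLi by blast
  have H2: "homeomorphic_map (topXLam (Lq True)) (topXLam (Lq False)) hlab"
    unfolding homeomorphic_map_maps homeomorphic_maps_def topspace_topXLam XLam_Lq
  proof (intro exI[of _ glab] conjI ballI)
    show "continuous_map (topXLam (Lq True)) (topXLam (Lq False)) hlab"
      unfolding topXLam_def XLam_Lq
      by (rule continuous_map_into_subtopology)
        (auto intro: continuous_map_from_subtopology cont_hlab hlab_oks)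
    show "continuous_map (topXLam (Lq False)) (topXLam (Lq True)) glab"
      unfolding topXLam_def XLam_Lq
      by (rule continuous_map_into_subtopology)
        (auto intro: continuous_map_from_subtopology cont_glab glab_oks)
    fix x show "glab (hlab x) = x" by (rule glab_hlab)
  next
    fix y assume "y \<in> {a. oks False a}"
    then show "hlab (glab y) = y" using hlab_glab by simp
  qed
  have Hpi: "piL (hL x) = hlab (piL x)" for x
    unfolding piL_def hL_def Enc_def using hl_fst[of "Dec True x"] by (simp add: fst_Dec fun_eq_iff)
  have S0: "shiftn 0 (hL (shiftn 1 x)) = shiftn (if fst (x 0) then 2 else 1) (hL x)" for x
  proof -
    have "hL (shiftn 1 x) = Enc False (hl (shiftn 1 (Dec True x)))" unfolding hL_def Dec_shift ..
    also have "\<dots> = Enc False (shiftn (if fst (x 0) then 2 else 1) (hl (Dec True x)))"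
      using hl_shift[of "Dec True x"] by (simp add: fst_Dec)
    finally show ?thesis unfolding hL_def Enc_shift by simp
  qed
  have S1: "shiftn (if fst (y 0) then 1 else 0) (hLi (shiftn 1 y)) = shiftn 1 (hLi y)"
    if y: "y \<in> XL (Lq False)" for y
  proof -
    define w where "w = Dec False y"
    have w: "w \<in> XLa False" using Dec_XL[OF y] unfolding w_def by simp
    have e: "hLi (shiftn 1 y) = Enc True (gl (shiftn 1 w))" unfolding hLi_def w_def Dec_shift ..
    show ?thesis
    proof (cases "fst (y 0)")
      case True
      then have w0: "fst (w 0)" unfolding w_def by (simp add: fst_Dec)
      have w1: "\<not> fst (w 1)" using XLa_start[OF w w0] XLa_stepT[OF w, of 0] by auto
      have "shiftn 1 (gl (shiftn 1 w)) = gl (shiftn 2 w)"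
        using gl_shift[of "shiftn 1 w"] w1 by (simp add: shiftn_apply numeral_2_eq_2)
      moreover have "shiftn 1 (gl w) = gl (shiftn 2 w)" using gl_shift[of w] w0 by simp
      ultimately show ?thesis using True e unfolding hLi_def w_def[symmetric] by (simp add: Enc_shift[symmetric])
    next
      case False
      then have w0: "\<not> fst (w 0)" unfolding w_def by (simp add: fst_Dec)
      have "shiftn 1 (gl w) = gl (shiftn 1 w)" using gl_shift[of w] w0 by simp
      then show ?thesis using False e unfolding hLi_def w_def[symmetric] by (simp add: Enc_shift[symmetric])
    qed
  qed
  show ?thesis unfolding coe_def even_Lq odd_Lq
  proof (intro exI conjI)
    show "homeomorphic_maps (topXL (Lq True)) (topXL (Lq False)) hL hLi" by (rule H1)
    show "homeomorphic_map (topXLam (Lq True)) (topXLam (Lq False)) hlab" by (rule H2)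
    show "continuous_map (topXL (Lq True)) (discrete_topology UNIV) (\<lambda>x. 0::nat)" by simp
    show "continuous_map (topXL (Lq True)) (discrete_topology UNIV) (\<lambda>x. if fst (x 0) then 2 else 1::nat)"
      by (rule cont_nat_XL)
    show "continuous_map (topXL (Lq False)) (discrete_topology UNIV) (\<lambda>y. if fst (y 0) then 1 else 0::nat)"
      by (rule cont_nat_XL)
    show "continuous_map (topXL (Lq False)) (discrete_topology UNIV) (\<lambda>y. 1::nat)" by simp
    show "\<forall>x\<in>XL (Lq True). piL (hL x) = hlab (piL x)" using Hpi by blast
    show "\<forall>x\<in>XL (Lq True). shiftn 0 (hL (shiftn 1 x)) = shiftn (if fst (x 0) then 2 else 1) (hL x)"
      using S0 by blast
    show "\<forall>y\<in>XL (Lq False). shiftn (if fst (y 0) then 1 else 0) (hLi (shiftn 1 y)) = shiftn 1 (hLi y)"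
      using S1 by blast
  qed
qed


end
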